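(* Let $q$ be a power of an odd prime, $c\in\mathbb{F}_q^*$, $b\in\mathbb{F}_q$ a nonsquare, $\beta\in\mathbb{F}_{q^2}$ with $\beta^2=b$, and $f(X)=c(X^{q+1}+X^2)$ on $\mathbb{F}_{q^2}$. If $\alpha\in\beta\mathbb{F}_q=\{y\beta: y\in\mathbb{F}_q\}$, then the number of $\gamma\in\mathbb{F}_{q^2}$ with $f(\gamma)=\alpha$ is $q$ if $\alpha=0$ and $0$ if $\alpha\neq0$. *)

theory Defs
  imports "HOL-Computational_Algebra.Primes"
begin

text \<open>The subfield F_q of a finite field F (used with |F| = q^2): the fixed points of x \<mapsto> x^q.\<close>
definition subfield_Fq :: "nat \<Rightarrow> 'a::field set" where
  "subfield_Fq q = {x. x ^ q = x}"

end

theory Submission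
  imports Defs "HOL-Computational_Algebra.Polynomial"
begin

lemma of_nat_mod_CHAR: "(of_nat (n mod CHAR('a)) :: 'a::comm_ring_1) = of_nat n"
proof -
  have "n = n mod CHAR('a) + CHAR('a) * (n div CHAR('a))" by simp
  then have "(of_nat n :: 'a) = of_nat (n mod CHAR('a)) + of_nat (CHAR('a) * (n div CHAR('a)))"
    by (metis of_nat_add)
  then show ?thesis by simp
qed

lemma of_nat_inj_CHAR:
  assumes "i < CHAR('a)" "j < CHAR('a)" "(of_nat i :: 'a::comm_ring_1) = of_nat j"
  shows "i = j"
proof (rule ccontr)
  assume "i \<noteq> j"
  then consider "i < j" | "j < i" by linarith
  then show False
  proof cases
    case 1
    then have "CHAR('a) dvd (j - i)" using assms(3) of_nat_eq_iff_char_dvd[of i j] by auto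
    then show False using 1 assms by (meson diff_less_Suc less_Suc_eq_le nat_dvd_not_less zero_less_diff less_imp_diff_less)
  next
    case 2
    then have "CHAR('a) dvd (i - j)" using assms(3) of_nat_eq_iff_char_dvd[of j i] by auto
    then show False using 2 assms by (meson nat_dvd_not_less zero_less_diff less_imp_diff_less)
  qed
qed

lemma char_dvd_card:
  shows "CHAR('a::{finite,field}) dvd card (UNIV :: 'a set)"
proof -
  define l where "l = CHAR('a)"
  have lpos: "l > 0" unfolding l_def by (rule finite_imp_CHAR_pos) simp
  define S where "S x = (\<lambda>i. x + of_nat i) ` {..<l}" for x :: 'a
  have memS: "y \<in> S x \<longleftrightarrow> (\<exists>n. y = x + of_nat n)" for x y
  proof
    assume "\<exists>n. y = x + of_nat n"
    then obtain n where "y = x + of_nat n" by blast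
    then have "y = x + of_nat (n mod l)" unfolding l_def by (simp add: of_nat_mod_CHAR)
    then show "y \<in> S x" unfolding S_def using lpos by auto
  qed (auto simp: S_def)
  have cardS: "card (S x) = l" for x
  proof -
    have "inj_on (\<lambda>i. x + (of_nat i :: 'a)) {..<l}"
    proof
      fix i j assume "i \<in> {..<l}" "j \<in> {..<l}" "x + (of_nat i :: 'a) = x + of_nat j"
      then show "i = j" unfolding l_def using of_nat_inj_CHAR by auto
    qed
    then show ?thesis unfolding S_def by (simp add: card_image)
  qed
  have shift: "y \<in> S x \<Longrightarrow> S y \<subseteq> S x" for x y
    by (auto simp: memS add.assoc simp flip: of_nat_add)
  have symm: "y \<in> S x \<Longrightarrow> x \<in> S y" for x y
  proof -
    assume "y \<in> S x"
    then obtain n where n: "y = x + of_nat n" using memS by blast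
    have "(of_nat (l * n) :: 'a) = 0" unfolding l_def by simp
    then have "x = y + of_nat (l * n - n)" using n lpos
      by (simp add: of_nat_diff algebra_simps)
    then show "x \<in> S y" using memS by blast
  qed
  have disj: "c1 \<inter> c2 = {}" if h: "c1 \<in> range S" "c2 \<in> range S" "c1 \<noteq> c2" for c1 c2
  proof -
    obtain x y where xy: "c1 = S x" "c2 = S y" using h(1,2) by blast
    show "c1 \<inter> c2 = {}"
    proof (rule ccontr)
      assume "c1 \<inter> c2 \<noteq> {}"
      then obtain z where "z \<in> S x" "z \<in> S y" using xy by blast
      then have "S z \<subseteq> S x" "S z \<subseteq> S y" "x \<in> S z" "y \<in> S z" using shift symm by auto
      then have "S x = S y" using shift by blast
      then show False using xy h(3) by simp
    qed
  qed
  have "l * card (range S) = card (\<Union>(range S))"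
    by (rule card_partition) (use cardS disj in auto)
  moreover have "\<Union>(range S) = UNIV" using memS by (metis UNIV_eq_I UN_iff add_0_right of_nat_0 rangeI)
  ultimately show ?thesis unfolding l_def by (metis dvd_triv_left)
qed


lemma char_eq_prime:
  assumes "prime p" "card (UNIV :: 'a set) = p ^ n" "n > 0"
  shows "CHAR('a::{finite,field}) = p"
proof -
  have pl: "prime CHAR('a)" by (rule prime_CHAR_semidom, rule finite_imp_CHAR_pos) simp
  have "CHAR('a) dvd p ^ n" using char_dvd_card assms(2) by metis
  then have "CHAR('a) dvd p" using pl prime_dvd_power by blast
  then show ?thesis using pl assms(1) primes_dvd_imp_eq by blast
qed

lemma pow_card_same:
  fixes x :: "'a :: {finite,field}"
  shows "x ^ card (UNIV :: 'a set) = x"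
proof (cases "x = 0")
  case False
  have "x * (\<Prod>y\<in>UNIV-{0}. x * y) = x * x ^ (card (UNIV :: 'a set) - 1) * \<Prod>(UNIV-{0})"
    by (simp add: prod.distrib mult_ac)
  also have "x * x ^ (card (UNIV :: 'a set) - 1) = x ^ Suc (card (UNIV :: 'a set) - 1)"
    by (subst power_Suc) auto
  also have "Suc (card (UNIV :: 'a set) - 1) = card (UNIV :: 'a set)"
    using finite_UNIV_card_ge_0[where ?'a = 'a] by simp
  also have "(\<Prod>y\<in>UNIV-{0}. x * y) = (\<Prod>y\<in>UNIV-{0}. y)"
    by (rule prod.reindex_bij_witness[of _ "\<lambda>y. y / x" "\<lambda>y. x * y"]) (use False in auto)
  finally show ?thesis
    by simp
qed (use finite_UNIV_card_ge_0[where ?'a = 'a] in auto)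

lemma card_roots_le:
  fixes a b :: "'a::field"
  assumes "q > 1"
  shows "card {x. x ^ q + a * x + b = 0} \<le> q"
proof -
  define P where "P = monom 1 q + [:b, a:]"
  have dl: "degree [:b, a:] < degree (monom (1::'a) q)" using assms
    by (simp add: degree_monom_eq)
  have dP: "degree P = q" unfolding P_def using dl by (simp add: degree_add_eq_left degree_monom_eq)
  then have "P \<noteq> 0" using assms by auto
  have "{x. x ^ q + a * x + b = 0} = {x. poly P x = 0}"
    unfolding P_def by (auto simp: poly_monom algebra_simps)
  then show ?thesis using card_poly_roots_bound[OF \<open>P \<noteq> 0\<close>] dP by simp
qed

theorem theorem15:
  fixes q :: nat and c b \<beta> \<alpha> :: "'a::{finite, field}"
  assumes q_pow: "\<exists>p k. prime p \<and> odd p \<and> k > 0 \<and> q = p ^ k"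
    and card_F: "card (UNIV :: 'a set) = q ^ 2"
    and c_in: "c \<in> subfield_Fq q" and c_nz: "c \<noteq> 0"
    and b_in: "b \<in> subfield_Fq q"
    and b_nonsq: "\<not> (\<exists>y \<in> subfield_Fq q. y ^ 2 = b)"
    and beta: "\<beta> ^ 2 = b"
    and alpha: "\<alpha> \<in> (\<lambda>y. y * \<beta>) ` subfield_Fq q"
  shows "card {\<gamma>::'a. c * (\<gamma> ^ (q + 1) + \<gamma> ^ 2) = \<alpha>} = (if \<alpha> = 0 then q else 0)"
proof -
  obtain p k where pk: "prime p" "odd p" "k > 0" "q = p ^ k" using q_pow by blast
  have cardF': "card (UNIV :: 'a set) = p ^ (2 * k)" using card_F pk(4) by (simp add: power_mult [symmetric] mult.commute)
  have charp: "CHAR('a) = p" by (rule char_eq_prime[OF pk(1) cardF']) (use pk in simp)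
  have add_q: "(x + y) ^ q = x ^ q + y ^ q" for x y :: 'a
    by (rule freshmans_dream') (use charp pk in auto)
  have oddq: "odd q" using pk by simp
  have q1: "q > 1" using pk by (metis one_less_power prime_gt_1_nat)
  have qq: "x ^ (q * q) = x" for x :: 'a using pow_card_same[of x] card_F by (simp add: power2_eq_square)
  define N :: "'a set" where "N = subfield_Fq q"
  have memN: "x \<in> N \<longleftrightarrow> x ^ q = x" for x unfolding N_def subfield_Fq_def by simp
  have cardN_le: "card N \<le> q"
  proof -
    have "N = {x. x ^ q + (-1) * x + 0 = 0}" using memN by auto
    then show ?thesis using card_roots_le[OF q1, of "-1" 0] by simp
  qed
  have cardN_ge: "q \<le> card N"
  proof -
    define T where "T x = x ^ q + x" for x :: 'a
    have TN: "T x \<in> N" for x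
      unfolding memN T_def add_q by (simp add: power_mult[symmetric] qq)
    have "UNIV = (\<Union>t\<in>N. {x. T x = t})" using TN by auto
    then have "card (UNIV :: 'a set) \<le> (\<Sum>t\<in>N. card {x. T x = t})"
      by (metis card_UN_le finite)
    also have "\<dots> \<le> (\<Sum>t\<in>N. q)"
    proof (rule sum_mono)
      fix t
      have "{x. T x = t} = {x. x ^ q + 1 * x + (-t) = 0}" unfolding T_def by (auto simp: algebra_simps)
      then show "card {x. T x = t} \<le> q" using card_roots_le[OF q1, of 1 "-t"] by simp
    qed
    finally have "q * q \<le> card N * q" using card_F by (simp add: power2_eq_square)
    then show ?thesis using q1 by simp
  qed
  have cardN: "card N = q" using cardN_le cardN_ge by simp
  have bq: "b ^ q = b" using b_in memN N_def by simp
  have cq: "c ^ q = c" using c_in memN N_def by simp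
  have b0: "b \<noteq> 0" using b_nonsq memN N_def by (metis power_zero_numeral zero_power oddq odd_pos)
  have beta0: "\<beta> \<noteq> 0" using beta b0 by auto
  have betaq: "\<beta> ^ q = - \<beta>"
  proof -
    have ne: "\<beta> ^ q \<noteq> \<beta>" using b_nonsq beta memN N_def by auto
    have "(\<beta> ^ q) ^ 2 = \<beta> ^ 2" using beta bq by (metis power_mult[symmetric] mult.commute power_mult)
    then have "(\<beta> ^ q - \<beta>) * (\<beta> ^ q + \<beta>) = 0" by (simp add: algebra_simps power2_eq_square)
    then show ?thesis using ne by (simp add: eq_neg_iff_add_eq_0)
  qed
  obtain y where y: "y \<in> N" "\<alpha> = y * \<beta>" using alpha N_def by blast
  have yq: "y ^ q = y" using y memN by simp
  have alphaq: "\<alpha> ^ q = - \<alpha>" using y yq betaq by (simp add: power_mult_distrib)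
  show ?thesis
  proof (cases "\<alpha> = 0")
    case True
    have "{\<gamma>::'a. c * (\<gamma> ^ (q + 1) + \<gamma> ^ 2) = \<alpha>} = (\<lambda>y. y * \<beta>) ` N"
    proof (rule set_eqI, rule iffI)
      fix \<gamma> assume "\<gamma> \<in> {\<gamma>::'a. c * (\<gamma> ^ (q + 1) + \<gamma> ^ 2) = \<alpha>}"
      then have "c * (\<gamma> * (\<gamma> ^ q + \<gamma>)) = 0" using True by (simp add: algebra_simps power2_eq_square)
      then have "\<gamma> * (\<gamma> ^ q + \<gamma>) = 0" using c_nz by simp
      then have "\<gamma> = 0 \<or> \<gamma> ^ q = - \<gamma>" by (simp add: eq_neg_iff_add_eq_0)
      then show "\<gamma> \<in> (\<lambda>y. y * \<beta>) ` N"
      proof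
        assume g0: "\<gamma> = 0"
        have "(0::'a) \<in> N" using memN q1 by simp
        then show ?thesis using g0 by (intro image_eqI[where x=0]) simp_all
      next
        assume g: "\<gamma> ^ q = - \<gamma>"
        have "(\<gamma> / \<beta>) ^ q = \<gamma> / \<beta>" using g betaq by (simp add: power_divide)
        then have "\<gamma> / \<beta> \<in> N" using memN by simp
        then show ?thesis using beta0 by (intro image_eqI[where x="\<gamma> / \<beta>"]) simp_all
      qed
    next
      fix \<gamma> assume "\<gamma> \<in> (\<lambda>y. y * \<beta>) ` N"
      then obtain t where t: "t \<in> N" "\<gamma> = t * \<beta>" by blast
      have "\<gamma> ^ q = - \<gamma>" using t memN betaq by (simp add: power_mult_distrib)
      then have "\<gamma> ^ (q + 1) + \<gamma> ^ 2 = 0" by (simp add: power2_eq_square)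
      then show "\<gamma> \<in> {\<gamma>::'a. c * (\<gamma> ^ (q + 1) + \<gamma> ^ 2) = \<alpha>}" using True by simp
    qed
    moreover have "inj_on (\<lambda>y. y * \<beta>) N" using beta0 by (auto intro: inj_onI)
    ultimately show ?thesis using True cardN by (simp add: card_image)
  next
    case False
    have "{\<gamma>::'a. c * (\<gamma> ^ (q + 1) + \<gamma> ^ 2) = \<alpha>} = {}"
    proof (rule ccontr)
      assume "{\<gamma>::'a. c * (\<gamma> ^ (q + 1) + \<gamma> ^ 2) = \<alpha>} \<noteq> {}"
      then obtain g where g: "c * (g ^ (q + 1) + g ^ 2) = \<alpha>" by blast
      have "\<alpha> ^ q = c ^ q * ((g ^ (q + 1)) ^ q + (g ^ 2) ^ q)"
        using g add_q by (metis power_mult_distrib)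
      also have "(g ^ (q + 1)) ^ q = g * g ^ q"
        by (simp add: power_mult[symmetric] algebra_simps power_add qq)
      also have "(g ^ 2) ^ q = g ^ q * g ^ q"
        by (simp add: power2_eq_square power_mult_distrib)
      finally have aq: "\<alpha> ^ q = c * (g * g ^ q + g ^ q * g ^ q)" using cq by simp
      have "\<alpha> ^ q + \<alpha> = c * (g * g ^ q + g ^ q * g ^ q) + c * (g ^ (q + 1) + g ^ 2)"
        using aq g by simp
      then have "c * (g ^ q + g) * (g ^ q + g) = \<alpha> ^ q + \<alpha>"
        by (simp add: algebra_simps power2_eq_square)
      then have "c * (g ^ q + g) * (g ^ q + g) = 0" using alphaq by simp
      then have "g ^ q + g = 0" using c_nz by simp
      moreover have "\<alpha> = c * g * (g ^ q + g)" using g[symmetric] by (simp add: algebra_simps power2_eq_square)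
      ultimately have "\<alpha> = 0" by simp
      then show False using False by simp
    qed
    then show ?thesis using False by simp
  qed
qed

end
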